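(* Let $(\Omega,\mathcal{F})$ be a measurable space and $T:\Omega\to\Omega$ a measurable map. Let $\mathbb{V}(A)=\sup_{P\in\Theta}P(A)$, $A\in\mathcal{F}$, be an upper probability, where $\Theta=\{P \text{ probability on }(\Omega,\mathcal{F}) : P(A)\le \mathbb{V}(A)\ \forall A\in\mathcal{F}\}$. Assume $\mathbb{V}$ is continuous (from above), $T$-invariant, and $T$-ergodic. Let $\Theta_0$ be the set of $T$-invariant probabilities in $\Theta$. Then for every $A\in\mathcal{I}$ with $\mathbb{V}(A)>0$ there exists $P'\in\Theta_0$ with $P'(A)=1$.
   Context: $\mathcal{I}=\{A\in\mathcal{F}: T^{-1}A=A\}$ is the $T$-invariant $\sigma$-algebra. $\mathbb{V}$ is continuous if $\mathbb{V}(A_n)\to 0$ whenever $A_n\in\mathcal{F}$, $A_n\downarrow\emptyset$. $\mathbb{V}$ is $T$-invariant if $\mathbb{V}(T^{-1}A)=\mathbb{V}(A)$ for all $A\in\mathcal{F}$. A continuous upper probability $\mathbb{V}$ is $T$-ergodic if $\mathbb{V}(A)\in\{0,1\}$ for every $A\in\mathcal{I}$. A probability $P$ is $T$-invariant if $P(T^{-1}A)=P(A)$ for all $A\in\mathcal{F}$. *)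

theory Defs
  imports "HOL-Probability.Probability"
begin

text \<open>The measurable space (Omega, F) is represented by a measure M (only space M and sets M
are used). Probabilities on (Omega, F) are measures P with prob_space P and sets P = sets M.\<close>

definition probs_on :: "'a measure \<Rightarrow> 'a measure set" where
  "probs_on M = {P. prob_space P \<and> sets P = sets M}"

definition Theta :: "'a measure \<Rightarrow> ('a set \<Rightarrow> real) \<Rightarrow> 'a measure set" where
  "Theta M V = {P \<in> probs_on M. \<forall>A\<in>sets M. measure P A \<le> V A}"

definition upper_probability :: "'a measure \<Rightarrow> ('a set \<Rightarrow> real) \<Rightarrow> bool" where
  "upper_probability M V \<longleftrightarrow> Theta M V \<noteq> {} \<and>
     (\<forall>A\<in>sets M. V A = (SUP P\<in>Theta M V. measure P A))"

definition continuous_cap :: "'a measure \<Rightarrow> ('a set \<Rightarrow> real) \<Rightarrow> bool" where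
  "continuous_cap M V \<longleftrightarrow>
     (\<forall>An :: nat \<Rightarrow> 'a set. (\<forall>n. An n \<in> sets M) \<longrightarrow> decseq An \<longrightarrow> (\<Inter>n. An n) = {}
        \<longrightarrow> (\<lambda>n. V (An n)) \<longlonglongrightarrow> 0)"

definition invariant_sets :: "'a measure \<Rightarrow> ('a \<Rightarrow> 'a) \<Rightarrow> 'a set set" where
  "invariant_sets M T = {A \<in> sets M. T -` A \<inter> space M = A}"

definition T_invariant_cap :: "'a measure \<Rightarrow> ('a \<Rightarrow> 'a) \<Rightarrow> ('a set \<Rightarrow> real) \<Rightarrow> bool" where
  "T_invariant_cap M T V \<longleftrightarrow> (\<forall>A\<in>sets M. V (T -` A \<inter> space M) = V A)"

definition T_ergodic_cap :: "'a measure \<Rightarrow> ('a \<Rightarrow> 'a) \<Rightarrow> ('a set \<Rightarrow> real) \<Rightarrow> bool" where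
  "T_ergodic_cap M T V \<longleftrightarrow> continuous_cap M V \<and>
     (\<forall>A\<in>invariant_sets M T. V A = 0 \<or> V A = 1)"

definition T_invariant_prob :: "'a measure \<Rightarrow> ('a \<Rightarrow> 'a) \<Rightarrow> 'a measure \<Rightarrow> bool" where
  "T_invariant_prob M T P \<longleftrightarrow> (\<forall>A\<in>sets M. measure P (T -` A \<inter> space M) = measure P A)"

definition Theta0 :: "'a measure \<Rightarrow> ('a \<Rightarrow> 'a) \<Rightarrow> ('a set \<Rightarrow> real) \<Rightarrow> 'a measure set" where
  "Theta0 M T V = {P \<in> Theta M V. T_invariant_prob M T P}"

end

theory Submission
  imports Defs
begin

lemma cluster_exists:
  fixes Q :: "nat \<Rightarrow> 'b \<Rightarrow> real"
  assumes "\<And>n B. Q n B \<in> {0..1}"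
  obtains x where "\<And>C. closed C \<Longrightarrow> eventually (\<lambda>n. Q n \<in> C) sequentially \<Longrightarrow> x \<in> C"
proof -
  let ?K = "PiE UNIV (\<lambda>_::'b. {0..1::real})"
  have "compactin (product_topology (\<lambda>_. euclidean) UNIV) ?K"
    by (subst compactin_PiE) auto
  then have K: "compact ?K" by (simp add: euclidean_product_topology)
  let ?F = "filtermap Q sequentially"
  have "?F \<noteq> bot" by (simp add: filtermap_bot_iff)
  moreover have "eventually (\<lambda>f. f \<in> ?K) ?F"
    using assms by (auto simp: eventually_filtermap PiE_def extensional_def)
  ultimately obtain x where x: "inf (nhds x) ?F \<noteq> bot"
    using K unfolding compact_filter by blast
  show ?thesis
  proof (rule that)
    fix C :: "('b \<Rightarrow> real) set" assume C: "closed C" and ev: "eventually (\<lambda>n. Q n \<in> C) sequentially"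
    show "x \<in> C"
    proof (rule ccontr)
      assume "x \<notin> C"
      then have "eventually (\<lambda>f. f \<in> - C) (nhds x)"
        using C by (intro eventually_nhds_in_open) auto
      moreover have "eventually (\<lambda>f. f \<in> C) ?F" using ev by (simp add: eventually_filtermap)
      ultimately have "eventually (\<lambda>_. False) (inf (nhds x) ?F)"
        unfolding eventually_inf by blast
      then show False using x by (simp add: eventually_False)
    qed
  qed
qed


lemma small_zero:
  fixes d :: real
  assumes "\<And>m::nat. \<bar>d\<bar> \<le> 1 / real (Suc m)"
  shows "d = 0"
proof (rule ccontr)
  assume "d \<noteq> 0"
  then have "\<bar>d\<bar> > 0" by simp
  then obtain m where "inverse (real (Suc m)) < \<bar>d\<bar>" using reals_Archimedean by blast
  with assms[of m] show False by (simp add: inverse_eq_divide)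
qed

theorem lemma3p1:
  fixes M :: "'a measure" and T :: "'a \<Rightarrow> 'a" and V :: "'a set \<Rightarrow> real"
  assumes "T \<in> measurable M M"
    and "upper_probability M V"
    and "continuous_cap M V"
    and "T_invariant_cap M T V"
    and "T_ergodic_cap M T V"
  shows "\<forall>A\<in>invariant_sets M T. V A > 0 \<longrightarrow> (\<exists>P'\<in>Theta0 M T V. measure P' A = 1)"
proof (intro ballI impI)
  fix A assume Ainv: "A \<in> invariant_sets M T" and VA: "V A > 0"
  define S where "S B = T -` B \<inter> space M" for B
  have Tsp: "\<And>w. w \<in> space M \<Longrightarrow> T w \<in> space M" by (rule measurable_space[OF assms(1)])
  have S_sets: "\<And>B. B \<in> sets M \<Longrightarrow> S B \<in> sets M"
    unfolding S_def by (rule measurable_sets[OF assms(1)])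
  have Sk_sets: "(S^^k) B \<in> sets M" if "B \<in> sets M" for k B
    using that by (induction k) (auto intro: S_sets)
  have V_Sk: "V ((S^^k) B) = V B" if "B \<in> sets M" for k B
    using that
  proof (induction k)
    case (Suc k)
    have "V (S ((S^^k) B)) = V ((S^^k) B)"
      using assms(4) Sk_sets[OF Suc.prems, of k] unfolding T_invariant_cap_def S_def by blast
    then show ?case using Suc by simp
  qed simp
  have Sk_un: "(S^^k) (B \<union> C) = (S^^k) B \<union> (S^^k) C" for k B C
    by (induction k) (auto simp: S_def)
  have Sk_int: "(S^^k) (B \<inter> C) = (S^^k) B \<inter> (S^^k) C" for k B C
    by (induction k) (auto simp: S_def)
  have Sk_empty: "(S^^k) {} = {}" for k
    by (induction k) (auto simp: S_def)
  have Sk_space: "(S^^k) (space M) = space M" for k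
    by (induction k) (auto simp: S_def Tsp)
  have Asets: "A \<in> sets M" and SA: "S A = A" using Ainv by (auto simp: invariant_sets_def S_def)
  have Sk_A: "(S^^k) A = A" for k
    by (induction k) (auto simp: SA)
  have VA1: "V A = 1" using assms(5) Ainv VA by (auto simp: T_ergodic_cap_def)
  have Th: "Theta M V \<noteq> {}" and VSUP: "V A = (SUP P\<in>Theta M V. measure P A)"
    using assms(2) Asets by (auto simp: upper_probability_def)
  have ThP: "prob_space P" "sets P = sets M" "\<And>B. B \<in> sets M \<Longrightarrow> measure P B \<le> V B"
    if "P \<in> Theta M V" for P
    using that by (auto simp: Theta_def probs_on_def)
  have "\<forall>n. \<exists>P. P \<in> Theta M V \<and> 1 - 1 / real (Suc n) < measure P A"
  proof
    fix n
    have bdd: "bdd_above ((\<lambda>P. measure P A) ` Theta M V)"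
      using ThP(1) by (intro bdd_aboveI[of _ 1]) (auto intro: prob_space.prob_le_1)
    have "1 - 1 / real (Suc n) < (SUP P\<in>Theta M V. measure P A)"
      using VSUP VA1 by simp
    then show "\<exists>P. P \<in> Theta M V \<and> 1 - 1 / real (Suc n) < measure P A"
      using less_cSUP_iff[OF Th bdd] by blast
  qed
  then obtain P where P0: "\<forall>n. P n \<in> Theta M V \<and> 1 - 1 / real (Suc n) < measure (P n) A"
    by (metis (no_types, lifting) choice)
  have P: "\<And>n. P n \<in> Theta M V" "\<And>n. 1 - 1 / real (Suc n) < measure (P n) A"
    using P0 by auto
  have Pp: "\<And>n. prob_space (P n)" and Ps: "\<And>n. sets (P n) = sets M"
    and PV: "\<And>n B. B \<in> sets M \<Longrightarrow> measure (P n) B \<le> V B"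
    using ThP[OF P(1)] by auto
  define Q where "Q n B = (\<Sum>k\<le>n. measure (P n) ((S^^k) B)) / real (Suc n)" for n B
  have Q01: "Q n B \<in> {0..1}" for n B
  proof -
    have "(\<Sum>k\<le>n. measure (P n) ((S^^k) B)) \<le> (\<Sum>k\<le>n. 1)"
      by (intro sum_mono) (simp add: prob_space.prob_le_1[OF Pp])
    moreover have "0 \<le> (\<Sum>k\<le>n. measure (P n) ((S^^k) B))" by (intro sum_nonneg) simp
    ultimately show ?thesis by (auto simp: Q_def)
  qed
  have QV: "Q n B \<le> V B" if "B \<in> sets M" for n B
  proof -
    have "(\<Sum>k\<le>n. measure (P n) ((S^^k) B)) \<le> (\<Sum>k\<le>n. V B)"
      using PV[OF Sk_sets[OF that]] V_Sk[OF that] by (intro sum_mono) simp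
    then show ?thesis by (simp add: Q_def divide_le_eq mult.commute)
  qed
  have Qsp: "Q n (space M) = 1" for n
  proof -
    have "space (P n) = space M" using Ps sets_eq_imp_space_eq by blast
    then have "measure (P n) (space M) = 1" using prob_space.prob_space[OF Pp, of n] by simp
    then show ?thesis by (simp add: Q_def Sk_space)
  qed
  have Qadd: "Q n (B \<union> C) = Q n B + Q n C" if "B \<in> sets M" "C \<in> sets M" "B \<inter> C = {}" for n B C
  proof -
    interpret prob_space "P n" by (rule Pp)
    have "measure (P n) ((S^^k) (B \<union> C)) = measure (P n) ((S^^k) B) + measure (P n) ((S^^k) C)" for k
    proof -
      have d: "(S^^k) B \<inter> (S^^k) C = {}" using Sk_int[of k B C] Sk_empty[of k] that(3) by simp
      show ?thesis unfolding Sk_un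
        by (rule finite_measure_Union) (simp_all add: d Ps Sk_sets that(1,2))
    qed
    then show ?thesis by (simp add: Q_def sum.distrib add_divide_distrib)
  qed
  have QA: "1 - 1 / real (Suc n) < Q n A" for n
    using P(2)[of n] by (simp add: Q_def Sk_A)
  have Qshift: "\<bar>Q n (S B) - Q n B\<bar> \<le> 1 / real (Suc n)" for n B
  proof -
    define f where "f k = measure (P n) ((S^^k) B)" for k
    have e: "(S^^k) (S B) = (S^^Suc k) B" for k by (simp add: funpow_Suc_right del: funpow.simps)
    have "Q n (S B) - Q n B = (\<Sum>k=0..n. f (Suc k) - f k) / real (Suc n)"
      by (simp add: Q_def e f_def atMost_atLeast0 sum_subtractf diff_divide_distrib)
    also have "\<dots> = (f (Suc n) - f 0) / real (Suc n)" by (subst sum_Suc_diff) auto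
    finally have eq: "Q n (S B) - Q n B = (f (Suc n) - f 0) / real (Suc n)" .
    have fr: "f k \<ge> 0 \<and> f k \<le> 1" for k unfolding f_def
      using prob_space.prob_le_1[OF Pp, of n] by simp
    have "\<bar>f (Suc n) - f 0\<bar> \<le> 1"
      using fr[of "Suc n"] fr[of 0] by (simp add: abs_le_iff)
    then show ?thesis unfolding eq by (simp add: divide_le_eq abs_divide)
  qed
  obtain x where x: "\<And>C. closed C \<Longrightarrow> eventually (\<lambda>n. Q n \<in> C) sequentially \<Longrightarrow> x \<in> C"
    using cluster_exists[of Q] Q01 by blast
  have x0: "0 \<le> x B" for B
  proof -
    have "x \<in> {f :: 'a set \<Rightarrow> real. 0 \<le> f B}"
    proof (rule x)
      show "closed {f :: 'a set \<Rightarrow> real. 0 \<le> f B}" by (intro closed_Collect_le continuous_intros continuous_on_product_coordinates)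
      show "eventually (\<lambda>n. Q n \<in> {f :: 'a set \<Rightarrow> real. 0 \<le> f B}) sequentially" by (intro always_eventually allI) (use Q01 in simp)
    qed
    then show ?thesis by simp
  qed
  have x1: "x B \<le> 1" for B
  proof -
    have "x \<in> {f :: 'a set \<Rightarrow> real. f B \<le> 1}"
    proof (rule x)
      show "closed {f :: 'a set \<Rightarrow> real. f B \<le> 1}" by (intro closed_Collect_le continuous_intros continuous_on_product_coordinates)
      show "eventually (\<lambda>n. Q n \<in> {f :: 'a set \<Rightarrow> real. f B \<le> 1}) sequentially" by (intro always_eventually allI) (use Q01 in simp)
    qed
    then show ?thesis by simp
  qed
  have xV: "x B \<le> V B" if "B \<in> sets M" for B
  proof -
    have "x \<in> {f :: 'a set \<Rightarrow> real. f B \<le> V B}"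
    proof (rule x)
      show "closed {f :: 'a set \<Rightarrow> real. f B \<le> V B}" by (intro closed_Collect_le continuous_intros continuous_on_product_coordinates)
      show "eventually (\<lambda>n. Q n \<in> {f :: 'a set \<Rightarrow> real. f B \<le> V B}) sequentially" by (intro always_eventually allI) (use QV[OF that] in simp)
    qed
    then show ?thesis by simp
  qed
  have xsp: "x (space M) = 1"
  proof -
    have "x \<in> {f :: 'a set \<Rightarrow> real. f (space M) = 1}"
    proof (rule x)
      show "closed {f :: 'a set \<Rightarrow> real. f (space M) = 1}" by (intro closed_Collect_eq continuous_intros continuous_on_product_coordinates)
      show "eventually (\<lambda>n. Q n \<in> {f :: 'a set \<Rightarrow> real. f (space M) = 1}) sequentially" by (intro always_eventually allI) (use Qsp in simp)
    qed
    then show ?thesis by simp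
  qed
  have xadd: "x (B \<union> C) = x B + x C" if "B \<in> sets M" "C \<in> sets M" "B \<inter> C = {}" for B C
  proof -
    have "x \<in> {f :: 'a set \<Rightarrow> real. f (B \<union> C) = f B + f C}"
    proof (rule x)
      show "closed {f :: 'a set \<Rightarrow> real. f (B \<union> C) = f B + f C}" by (intro closed_Collect_eq continuous_intros continuous_on_product_coordinates)
      show "eventually (\<lambda>n. Q n \<in> {f :: 'a set \<Rightarrow> real. f (B \<union> C) = f B + f C}) sequentially" by (intro always_eventually allI) (use Qadd[OF that] in simp)
    qed
    then show ?thesis by simp
  qed
  have xA: "x A = 1"
  proof -
    have "\<bar>x A - 1\<bar> \<le> 1 / real (Suc m)" for m
    proof -
      have ev: "eventually (\<lambda>n. Q n \<in> {f :: 'a set \<Rightarrow> real. 1 - 1 / real (Suc m) \<le> f A}) sequentially"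
        unfolding eventually_sequentially
      proof (intro exI[of _ m] allI impI)
        fix n assume "m \<le> n"
        then have "1 / real (Suc n) \<le> 1 / real (Suc m)" by (simp add: frac_le)
        then show "Q n \<in> {f :: 'a set \<Rightarrow> real. 1 - 1 / real (Suc m) \<le> f A}" using QA[of n] by simp
      qed
      have "x \<in> {f :: 'a set \<Rightarrow> real. 1 - 1 / real (Suc m) \<le> f A}"
        by (rule x[OF _ ev]) (intro closed_Collect_le continuous_intros continuous_on_product_coordinates)
      then show ?thesis using x1[of A] by auto
    qed
    then show ?thesis using small_zero[of "x A - 1"] by simp
  qed
  have xS: "x (S B) = x B" for B
  proof -
    have "\<bar>x (S B) - x B\<bar> \<le> 1 / real (Suc m)" for m
    proof -
      have ev: "eventually (\<lambda>n. Q n \<in> {f :: 'a set \<Rightarrow> real. \<bar>f (S B) - f B\<bar> \<le> 1 / real (Suc m)}) sequentially"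
        unfolding eventually_sequentially
      proof (intro exI[of _ m] allI impI)
        fix n assume "m \<le> n"
        then have "1 / real (Suc n) \<le> 1 / real (Suc m)" by (simp add: frac_le)
        then show "Q n \<in> {f :: 'a set \<Rightarrow> real. \<bar>f (S B) - f B\<bar> \<le> 1 / real (Suc m)}" using Qshift[of n B] by simp
      qed
      have "x \<in> {f :: 'a set \<Rightarrow> real. \<bar>f (S B) - f B\<bar> \<le> 1 / real (Suc m)}"
        by (rule x[OF _ ev]) (intro closed_Collect_le continuous_intros continuous_on_product_coordinates)
      then show ?thesis by simp
    qed
    then show ?thesis using small_zero[of "x (S B) - x B"] by simp
  qed
  define mu where "mu B = ennreal (x B)" for B
  define P' where "P' = measure_of (space M) (sets M) mu"
  have xempty: "x {} = 0" using xadd[of "{}" "{}"] by simp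
  have pos: "positive (sets M) mu" by (simp add: positive_def mu_def xempty)
  have add: "additive (sets M) mu"
    unfolding additive_def
  proof (intro ballI impI)
    fix B C assume "B \<in> sets M" "C \<in> sets M" "B \<inter> C = {}"
    show "mu (B \<union> C) = mu B + mu C"
      unfolding mu_def xadd[OF \<open>B \<in> sets M\<close> \<open>C \<in> sets M\<close> \<open>B \<inter> C = {}\<close>]
      by (rule ennreal_plus[OF x0 x0])
  qed
  have ca: "countably_additive (sets M) mu"
  proof (rule sets.empty_continuous_imp_countably_additive[OF pos add])
    show "\<forall>B\<in>sets M. mu B \<noteq> \<infinity>" by (simp add: mu_def)
    fix An :: "nat \<Rightarrow> 'a set"
    assume r: "range An \<subseteq> sets M" and d: "decseq An" and e: "(\<Inter>i. An i) = {}"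
    have rn: "An n \<in> sets M" for n using r by blast
    have Vt: "(\<lambda>n. V (An n)) \<longlonglongrightarrow> 0"
      using assms(3) rn d e unfolding continuous_cap_def by blast
    have l: "\<forall>n. 0 \<le> x (An n)" using x0 by blast
    have u: "\<forall>n. x (An n) \<le> V (An n)" using xV[OF rn] by blast
    have xt: "(\<lambda>n. x (An n)) \<longlonglongrightarrow> 0"
      by (rule real_tendsto_sandwich[OF always_eventually[OF l] always_eventually[OF u] tendsto_const Vt])
    then show "(\<lambda>i. mu (An i)) \<longlonglongrightarrow> 0"
      unfolding mu_def using tendsto_ennrealI[OF xt] by simp
  qed
  have sa: "sigma_algebra (space M) (sets M)" by (rule sets.sigma_algebra_axioms)
  have emP: "emeasure P' B = ennreal (x B)" if "B \<in> sets M" for B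
    unfolding P'_def using emeasure_measure_of_sigma[OF sa pos ca that] by (simp add: mu_def)
  have sP: "sets P' = sets M" unfolding P'_def
    by (simp add: sets_measure_of[OF sets.space_closed] sets.sigma_sets_eq)
  have spP: "space P' = space M" unfolding P'_def by (simp add: space_measure_of_conv)
  have mP: "measure P' B = x B" if "B \<in> sets M" for B
    using emP[OF that] x0 by (simp add: measure_def)
  have probP: "prob_space P'"
    by (rule prob_spaceI) (simp add: spP emP xsp)
  show "\<exists>P'\<in>Theta0 M T V. measure P' A = 1"
  proof (intro bexI[of _ P'])
    show "measure P' A = 1" using mP[OF Asets] xA by simp
    have th: "P' \<in> Theta M V"
      unfolding Theta_def probs_on_def using probP sP mP xV by simp
    have "T_invariant_prob M T P'"
      unfolding T_invariant_prob_def
    proof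
      fix B assume B: "B \<in> sets M"
      show "measure P' (T -` B \<inter> space M) = measure P' B"
        using mP[OF B] mP[OF S_sets[OF B]] xS[of B] by (simp add: S_def)
    qed
    then show "P' \<in> Theta0 M T V" unfolding Theta0_def using th by simp
  qed
qed

end
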